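(* There exist absolute constants $C_1, C_2>0$ with the following property. Let $\Omega\subset\mathbb{R}^d$ be compact, let $\mu$ be a probability measure on $\Omega$, and let $X_N\subset\mathcal{C}(\Omega)$ be a linear subspace of (complex-valued) continuous functions which is $N$-dimensional as a subspace of $L_2(\Omega,\mu)$. Let $\{u_1,\dots,u_N\}$ be any orthonormal basis of $X_N$ in $L_2(\Omega,\mu)$ and put $w(\mathbf{x}):=(|u_1(\mathbf{x})|^2+\dots+|u_N(\mathbf{x})|^2)^{1/2}$. Then there exists a set of $m\le C_1N$ points $\xi^1,\dots,\xi^m\in\Omega$ such that for every $f\in X_N$ $$ \sup_{\mathbf{x}\in\Omega,\ w(\mathbf{x})>0}\frac{|f(\mathbf{x})|}{w(\mathbf{x})}\le C_2\max_{1\le j\le m}|f(\xi^j)|, $$ and, in particular, $$ \|f\|_\infty\le C_2\,\|w\|_\infty\,\max_{1\le j\le m}|f(\xi^j)|, $$ where $\|g\|_\infty=\max_{\mathbf{x}\in\Omega}|g(\mathbf{x})|$.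
   Context: $\mathcal{C}(\Omega)$ is the space of continuous functions on $\Omega$ with the uniform norm $\|f\|_\infty=\max_{\mathbf x\in\Omega}|f(\mathbf x)|$. $L_2(\Omega,\mu)$ has inner product $\langle f,g\rangle=\int_\Omega f\bar g\,d\mu$. The function $w$ does not depend on the choice of orthonormal basis. If $w(\mathbf x)=0$ then every $f\in X_N$ vanishes at $\mathbf x$. *)

theory Defs
  imports "HOL-Probability.Probability"
begin

text \<open>Points of R^d are represented as functions nat => real vanishing from index d on;
  the type nat => real carries the product topology, which on such finitely supported
  sets coincides with the Euclidean topology of R^d.\<close>

definition euclid_pts :: "nat \<Rightarrow> (nat \<Rightarrow> real) set" where
  "euclid_pts d = {x. \<forall>i\<ge>d. x i = 0}"

definition complex_fun_subspace :: "('a \<Rightarrow> complex) set \<Rightarrow> bool" where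
  "complex_fun_subspace X \<longleftrightarrow> (\<lambda>x. 0) \<in> X \<and> (\<forall>f\<in>X. \<forall>g\<in>X. (\<lambda>x. f x + g x) \<in> X)
     \<and> (\<forall>c. \<forall>f\<in>X. (\<lambda>x. c * f x) \<in> X)"

text \<open>Maximum of |f(xi^j)| over j < m (with the harmless value 0 when m = 0).\<close>
definition max_abs_pts :: "('a \<Rightarrow> complex) \<Rightarrow> (nat \<Rightarrow> 'a) \<Rightarrow> nat \<Rightarrow> real" where
  "max_abs_pts f \<xi> m = Max (insert 0 ((\<lambda>j. cmod (f (\<xi> j))) ` {..<m}))"

end

theory Submission
  imports Defs "Jordan_Normal_Form.Determinant"
begin

type_synonym cmat = "nat \<Rightarrow> nat \<Rightarrow> complex"
type_synonym cvec = "nat \<Rightarrow> complex"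

definition cmm :: "nat \<Rightarrow> cmat \<Rightarrow> cmat \<Rightarrow> cmat" where
  "cmm n A B = (\<lambda>i j. \<Sum>k<n. A i k * B k j)"
definition cmv :: "nat \<Rightarrow> cmat \<Rightarrow> cvec \<Rightarrow> cvec" where
  "cmv n A x = (\<lambda>i. \<Sum>j<n. A i j * x j)"
definition cip :: "nat \<Rightarrow> cvec \<Rightarrow> cvec \<Rightarrow> complex" where
  "cip n x y = (\<Sum>i<n. cnj (x i) * y i)"
definition idm :: cmat where "idm = (\<lambda>i j. if i = j then 1 else 0)"
definition ctr :: "nat \<Rightarrow> cmat \<Rightarrow> complex" where "ctr n A = (\<Sum>i<n. A i i)"
definition cherm :: "nat \<Rightarrow> cmat \<Rightarrow> bool" where
  "cherm n A = (\<forall>i<n. \<forall>j<n. A j i = cnj (A i j))"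
definition cqf :: "nat \<Rightarrow> cmat \<Rightarrow> cvec \<Rightarrow> complex" where
  "cqf n A x = cip n x (cmv n A x)"
definition cpsd :: "nat \<Rightarrow> cmat \<Rightarrow> bool" where
  "cpsd n A = (cherm n A \<and> (\<forall>x. 0 \<le> Re (cqf n A x)))"
definition cpd :: "nat \<Rightarrow> cmat \<Rightarrow> bool" where
  "cpd n A = (cherm n A \<and> (\<forall>x. (\<exists>i<n. x i \<noteq> 0) \<longrightarrow> 0 < Re (cqf n A x)))"
definition cinv :: "nat \<Rightarrow> cmat \<Rightarrow> cmat \<Rightarrow> bool" where
  "cinv n A R = (\<forall>i<n. \<forall>j<n. cmm n A R i j = idm i j \<and> cmm n R A i j = idm i j)"
definition cnrm :: "nat \<Rightarrow> cvec \<Rightarrow> real" where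
  "cnrm n x = (\<Sum>i<n. (cmod (x i))^2)"

lemma sum_idm_right: "k < n \<Longrightarrow> (\<Sum>l<n. idm k l * f l) = f k"
proof -
  assume k: "k < n"
  have "(\<Sum>l<n. idm k l * f l) = (\<Sum>l<n. if k = l then f l else 0)"
    by (rule sum.cong) (auto simp: idm_def)
  also have "\<dots> = f k" using k by simp
  finally show ?thesis .
qed

lemma sum_idm_left: "k < n \<Longrightarrow> (\<Sum>l<n. f l * idm l k) = f k"
proof -
  assume k: "k < n"
  have "(\<Sum>l<n. f l * idm l k) = (\<Sum>l<n. if l = k then f l else 0)"
    by (rule sum.cong) (auto simp: idm_def)
  also have "\<dots> = f k" using k by simp
  finally show ?thesis .
qed

lemma cmv_cmm: "cmv n (cmm n A B) x = cmv n A (cmv n B x)"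
proof (rule ext)
  fix i
  have "(\<Sum>j<n. (\<Sum>k<n. A i k * B k j) * x j) = (\<Sum>j<n. \<Sum>k<n. A i k * (B k j * x j))"
    by (simp add: sum_distrib_right mult.assoc)
  also have "\<dots> = (\<Sum>k<n. \<Sum>j<n. A i k * (B k j * x j))" by (rule sum.swap)
  also have "\<dots> = (\<Sum>k<n. A i k * (\<Sum>j<n. B k j * x j))" by (simp add: sum_distrib_left)
  finally show "cmv n (cmm n A B) x i = cmv n A (cmv n B x) i"
    unfolding cmv_def cmm_def .
qed

lemma cmm_assoc: "cmm n (cmm n A B) C = cmm n A (cmm n B C)"
proof (intro ext)
  fix i j
  have "(\<Sum>l<n. (\<Sum>k<n. A i k * B k l) * C l j) = (\<Sum>l<n. \<Sum>k<n. A i k * (B k l * C l j))"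
    by (simp add: sum_distrib_right mult.assoc)
  also have "\<dots> = (\<Sum>k<n. \<Sum>l<n. A i k * (B k l * C l j))" by (rule sum.swap)
  also have "\<dots> = (\<Sum>k<n. A i k * (\<Sum>l<n. B k l * C l j))" by (simp add: sum_distrib_left)
  finally show "cmm n (cmm n A B) C i j = cmm n A (cmm n B C) i j"
    unfolding cmm_def .
qed

lemma cip_conj: "cip n x y = cnj (cip n y x)"
  by (simp add: cip_def mult.commute)

lemma cip_cong: "(\<And>i. i < n \<Longrightarrow> x i = x' i) \<Longrightarrow> (\<And>i. i < n \<Longrightarrow> y i = y' i) \<Longrightarrow>
  cip n x y = cip n x' y'"
  by (simp add: cip_def)

lemma chermD: "cherm n A \<Longrightarrow> i < n \<Longrightarrow> j < n \<Longrightarrow> A j i = cnj (A i j)"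
  unfolding cherm_def by blast

lemma cherm_adj:
  assumes "cherm n A"
  shows "cip n x (cmv n A y) = cip n (cmv n A x) y"
proof -
  have "cip n x (cmv n A y) = (\<Sum>i<n. \<Sum>j<n. cnj (x i) * (A i j * y j))"
    by (simp add: cip_def cmv_def sum_distrib_left)
  also have "\<dots> = (\<Sum>j<n. \<Sum>i<n. cnj (x i) * (A i j * y j))" by (rule sum.swap)
  also have "\<dots> = (\<Sum>j<n. \<Sum>i<n. cnj (A j i * x i) * y j)"
  proof (intro sum.cong refl)
    fix i j assume "i \<in> {..<n}" "j \<in> {..<n}"
    then have "A i j = cnj (A j i)" using chermD[OF assms, of j i] by simp
    then show "cnj (x i) * (A i j * y j) = cnj (A j i * x i) * y j" by simp
  qed
  also have "\<dots> = cip n (cmv n A x) y"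
    by (simp add: cip_def cmv_def sum_distrib_right)
  finally show ?thesis .
qed

lemma cqf_real: "cherm n A \<Longrightarrow> cqf n A x = of_real (Re (cqf n A x))"
proof -
  assume h: "cherm n A"
  have "cqf n A x = cnj (cqf n A x)"
    unfolding cqf_def using cherm_adj[OF h, of x x] cip_conj[of n "cmv n A x" x] by simp
  then show ?thesis by (metis Reals_cnj_iff of_real_Re)
qed

lemma cmv_lin: "cmv n A (\<lambda>i. x i + t * y i) = (\<lambda>i. cmv n A x i + t * cmv n A y i)"
  by (simp add: cmv_def distrib_left sum.distrib sum_distrib_left mult.left_commute)

lemma cip_lin1: "cip n (\<lambda>i. x i + t * y i) z = cip n x z + cnj t * cip n y z"
  by (simp add: cip_def distrib_right sum.distrib sum_distrib_left mult.assoc)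

lemma cip_lin2: "cip n z (\<lambda>i. x i + t * y i) = cip n z x + t * cip n z y"
  by (simp add: cip_def distrib_left sum.distrib sum_distrib_left mult.left_commute)

lemma cip_self: "cip n x x = of_real (cnrm n x)"
  unfolding cip_def cnrm_def of_real_sum
  by (rule sum.cong) (simp_all add: mult.commute complex_norm_square[symmetric] del: of_real_power)


lemma real_quad_lemma:
  fixes a b k :: real
  assumes h: "\<And>s. 0 \<le> a - 2 * s * k + s ^ 2 * k * b" and b: "0 \<le> b" and k: "0 \<le> k"
  shows "k \<le> a * b"
proof (cases "b > 0")
  case True
  have "0 \<le> a - 2*(1/b)*k + (1/b)^2*k*b" by (rule h)
  also have "\<dots> = a - k/b" using True by (simp add: field_simps power2_eq_square)
  finally have "k/b \<le> a" by simp
  then show ?thesis using True by (simp add: field_simps mult.commute)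
next
  case False
  then have b0: "b = 0" using b by simp
  show ?thesis
  proof (rule ccontr)
    assume "\<not> k \<le> a*b"
    then have kp: "k > 0" using b0 by simp
    have "0 \<le> a - 2*((a+1)/(2*k))*k + ((a+1)/(2*k))^2*k*b" by (rule h)
    then show False using kp b0 by (simp add: field_simps)
  qed
qed

lemma cpsdD: "cpsd n P \<Longrightarrow> 0 \<le> Re (cqf n P x)"
  unfolding cpsd_def by blast

lemma cpsd_herm: "cpsd n P \<Longrightarrow> cherm n P"
  unfolding cpsd_def by blast

lemma cpdD: "cpd n P \<Longrightarrow> \<exists>i<n. x i \<noteq> 0 \<Longrightarrow> 0 < Re (cqf n P x)"
  unfolding cpd_def by blast

lemma cpd_herm: "cpd n P \<Longrightarrow> cherm n P"
  unfolding cpd_def by blast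

lemma cqf_add:
  assumes H: "cherm n P"
  shows "cqf n P (\<lambda>i. x i + t * y i) = cqf n P x + t * cip n x (cmv n P y)
     + cnj t * cnj (cip n x (cmv n P y)) + cnj t * t * cqf n P y"
proof -
  have e: "cip n y (cmv n P x) = cnj (cip n x (cmv n P y))"
    using cherm_adj[OF H, of y x] cip_conj[of n "cmv n P y" x] by simp
  show ?thesis
    unfolding cqf_def cmv_lin cip_lin1 cip_lin2 e by (simp add: algebra_simps)
qed

lemma cpsd_CS:
  assumes P: "cpsd n P"
  shows "(cmod (cip n x (cmv n P y)))^2 \<le> Re (cqf n P x) * Re (cqf n P y)"
proof -
  have H: "cherm n P" using P by (rule cpsd_herm)
  define c where "c = cip n x (cmv n P y)"
  define k where "k = (cmod c)^2"
  have ck: "c * cnj c = of_real k" unfolding k_def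
    by (simp add: complex_norm_square[symmetric] del: of_real_power)
  have "0 \<le> Re (cqf n P x) - 2 * s * k + s ^ 2 * k * Re (cqf n P y)" for s
  proof -
    define t where "t = - of_real s * cnj c"
    have "cqf n P (\<lambda>i. x i + t * y i) = cqf n P x - of_real s * (c * cnj c)
       - of_real s * (c * cnj c) + (of_real s)^2 * (c * cnj c) * cqf n P y"
      unfolding cqf_add[OF H] t_def c_def[symmetric] by (simp add: algebra_simps power2_eq_square)
    also have "\<dots> = cqf n P x - of_real (2 * s * k) + of_real (s ^ 2 * k) * cqf n P y"
      unfolding ck by (simp add: algebra_simps power2_eq_square)
    finally have eq: "cqf n P (\<lambda>i. x i + t * y i) = cqf n P x - of_real (2 * s * k) + of_real (s ^ 2 * k) * cqf n P y" .
    have "0 \<le> Re (cqf n P (\<lambda>i. x i + t * y i))" using P by (rule cpsdD)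
    then show ?thesis unfolding eq by simp
  qed
  moreover have "0 \<le> Re (cqf n P y)" using P by (rule cpsdD)
  ultimately have "k \<le> Re (cqf n P x) * Re (cqf n P y)"
    by (intro real_quad_lemma) (auto simp: k_def)
  then show ?thesis by (simp add: k_def c_def)
qed

definition ev :: "nat \<Rightarrow> cvec" where "ev i = (\<lambda>k. if k = i then 1 else 0)"

lemma cmv_ev: "j < n \<Longrightarrow> cmv n P (ev j) = (\<lambda>k. P k j)"
  unfolding cmv_def ev_def using sum_idm_left[of j n] by (simp add: idm_def)

lemma cip_ev: "i < n \<Longrightarrow> cip n (ev i) z = z i"
proof -
  assume i: "i < n"
  have "cip n (ev i) z = (\<Sum>l<n. if l = i then z l else 0)"
    unfolding cip_def ev_def by (rule sum.cong) auto
  then show ?thesis using i by simp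
qed

lemma cqf_ev: "i < n \<Longrightarrow> cqf n P (ev i) = P i i"
  by (simp add: cqf_def cmv_ev cip_ev)

lemma cpsd_diag: "cpsd n P \<Longrightarrow> i < n \<Longrightarrow> 0 \<le> Re (P i i)"
  using cqf_ev[of i n P] cpsdD[of n P "ev i"] by simp

lemma cpsd_entry:
  assumes "cpsd n P" "i < n" "j < n"
  shows "(cmod (P i j))^2 \<le> Re (P i i) * Re (P j j)"
proof -
  have e: "cip n (ev i) (cmv n P (ev j)) = P i j" using assms(2,3) by (simp add: cmv_ev cip_ev)
  show ?thesis using cpsd_CS[OF assms(1), of "ev i" "ev j"]
    unfolding e cqf_ev[OF assms(2)] cqf_ev[OF assms(3)] .
qed

lemma amgm_lemma:
  fixes p A B :: real
  assumes "0 \<le> A" "0 \<le> B" "0 \<le> p" "p^2 \<le> A * B"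
  shows "p \<le> (A + B) / 2"
proof -
  have "0 \<le> (A - B)^2" by simp
  then have "A * B \<le> ((A + B)/2)^2" by (simp add: power2_eq_square field_simps)
  then have "p^2 \<le> ((A + B)/2)^2" using assms(4) by linarith
  moreover have "0 \<le> (A + B) / 2" using assms(1,2) by simp
  ultimately show ?thesis by (rule power2_le_imp_le)
qed


lemma Re_ctr: "Re (ctr n P) = (\<Sum>i<n. Re (P i i))"
  by (simp add: ctr_def)

lemma sum_sym_lemma:
  fixes a d :: "nat \<Rightarrow> real"
  shows "(\<Sum>i<n. \<Sum>j<n. (a i * d j + a j * d i) / 2) = (\<Sum>i<n. a i) * (\<Sum>j<n. d j)"
proof -
  have "(\<Sum>i<n. \<Sum>j<n. (a i * d j + a j * d i) / 2)
      = ((\<Sum>i<n. \<Sum>j<n. a i * d j) + (\<Sum>i<n. \<Sum>j<n. a j * d i)) / 2"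
    by (simp add: sum.distrib add_divide_distrib sum_divide_distrib)
  also have "(\<Sum>i<n. \<Sum>j<n. a j * d i) = (\<Sum>i<n. \<Sum>j<n. a i * d j)" by (rule sum.swap)
  also have "(\<Sum>i<n. \<Sum>j<n. a i * d j) = (\<Sum>i<n. a i) * (\<Sum>j<n. d j)" by (simp add: sum_product)
  finally show ?thesis by simp
qed

lemma cpsd_tr_nonneg: "cpsd n P \<Longrightarrow> 0 \<le> Re (ctr n P)"
  unfolding Re_ctr by (rule sum_nonneg) (simp add: cpsd_diag)

lemma cpsd_qf_bound:
  assumes P: "cpsd n P"
  shows "Re (cqf n P x) \<le> Re (ctr n P) * cnrm n x"
proof -
  define a where "a i = (cmod (x i))^2" for i
  define d where "d i = Re (P i i)" for i
  have "Re (cqf n P x) = (\<Sum>i<n. \<Sum>j<n. Re (cnj (x i) * (P i j * x j)))"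
    by (simp add: cqf_def cip_def cmv_def sum_distrib_left)
  also have "\<dots> \<le> (\<Sum>i<n. \<Sum>j<n. (a i * d j + a j * d i) / 2)"
  proof (intro sum_mono)
    fix i j assume i: "i \<in> {..<n}" and j: "j \<in> {..<n}"
    have "Re (cnj (x i) * (P i j * x j)) \<le> cmod (cnj (x i) * (P i j * x j))" by (rule complex_Re_le_cmod)
    also have "\<dots> = cmod (x i) * cmod (P i j) * cmod (x j)" by (simp add: norm_mult)
    also have "\<dots> \<le> (a i * d j + a j * d i) / 2"
    proof (rule amgm_lemma)
      show "0 \<le> a i * d j" using cpsd_diag[OF P] j by (simp add: a_def d_def)
      show "0 \<le> a j * d i" using cpsd_diag[OF P] i by (simp add: a_def d_def)
      show "0 \<le> cmod (x i) * cmod (P i j) * cmod (x j)" by simp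
      have "(cmod (x i) * cmod (P i j) * cmod (x j))^2 = (a i * a j) * (cmod (P i j))^2"
        by (simp add: a_def power_mult_distrib)
      also have "\<dots> \<le> (a i * a j) * (d i * d j)"
        using cpsd_entry[OF P] i j by (intro mult_left_mono) (auto simp: a_def d_def)
      also have "\<dots> = a i * d j * (a j * d i)" by (simp add: ac_simps)
      finally show "(cmod (x i) * cmod (P i j) * cmod (x j))^2 \<le> a i * d j * (a j * d i)" .
    qed
    finally show "Re (cnj (x i) * (P i j * x j)) \<le> (a i * d j + a j * d i) / 2" .
  qed
  also have "\<dots> = (\<Sum>i<n. a i) * (\<Sum>j<n. d j)" by (rule sum_sym_lemma)
  also have "\<dots> = Re (ctr n P) * cnrm n x" by (simp add: a_def d_def cnrm_def Re_ctr)
  finally show ?thesis .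
qed

lemma cpsd_tr_mult:
  assumes R: "cpsd n R" and S: "cpsd n S"
  shows "Re (ctr n (cmm n R S)) \<le> Re (ctr n R) * Re (ctr n S)"
proof -
  define a where "a i = Re (R i i)" for i
  define d where "d i = Re (S i i)" for i
  have "Re (ctr n (cmm n R S)) = (\<Sum>i<n. \<Sum>k<n. Re (R i k * S k i))"
    by (simp add: ctr_def cmm_def)
  also have "\<dots> \<le> (\<Sum>i<n. \<Sum>k<n. (a i * d k + a k * d i) / 2)"
  proof (intro sum_mono)
    fix i k assume i: "i \<in> {..<n}" and k: "k \<in> {..<n}"
    have "Re (R i k * S k i) \<le> cmod (R i k * S k i)" by (rule complex_Re_le_cmod)
    also have "\<dots> = cmod (R i k) * cmod (S k i)" by (simp add: norm_mult)
    also have "\<dots> \<le> (a i * d k + a k * d i) / 2"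
    proof (rule amgm_lemma)
      show "0 \<le> a i * d k" using cpsd_diag[OF R] cpsd_diag[OF S] i k by (simp add: a_def d_def)
      show "0 \<le> a k * d i" using cpsd_diag[OF R] cpsd_diag[OF S] i k by (simp add: a_def d_def)
      show "0 \<le> cmod (R i k) * cmod (S k i)" by simp
      have "(cmod (R i k) * cmod (S k i))^2 = (cmod (R i k))^2 * (cmod (S k i))^2"
        by (simp add: power_mult_distrib)
      also have "\<dots> \<le> (a i * a k) * (d k * d i)"
        using cpsd_entry[OF R, of i k] cpsd_entry[OF S, of k i] i k
        by (intro mult_mono) (auto simp: a_def d_def cpsd_diag[OF R] cpsd_diag[OF S])
      also have "\<dots> = a i * d k * (a k * d i)" by (simp add: ac_simps)
      finally show "(cmod (R i k) * cmod (S k i))^2 \<le> a i * d k * (a k * d i)" .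
    qed
    finally show "Re (R i k * S k i) \<le> (a i * d k + a k * d i) / 2" .
  qed
  also have "\<dots> = (\<Sum>i<n. a i) * (\<Sum>j<n. d j)" by (rule sum_sym_lemma)
  also have "\<dots> = Re (ctr n R) * Re (ctr n S)" by (simp add: a_def d_def Re_ctr)
  finally show ?thesis .
qed

lemma ctr_comm: "ctr n (cmm n A B) = ctr n (cmm n B A)"
proof -
  have "ctr n (cmm n A B) = (\<Sum>i<n. \<Sum>k<n. A i k * B k i)" by (simp add: ctr_def cmm_def)
  also have "\<dots> = (\<Sum>k<n. \<Sum>i<n. A i k * B k i)" by (rule sum.swap)
  also have "\<dots> = ctr n (cmm n B A)" by (simp add: ctr_def cmm_def mult.commute)
  finally show ?thesis .
qed

lemma herm_tr_sq_nonneg: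
  assumes H: "cherm n R"
  shows "0 \<le> Re (ctr n (cmm n R R))"
proof -
  have "Re (ctr n (cmm n R R)) = (\<Sum>i<n. \<Sum>k<n. Re (R i k * R k i))"
    by (simp add: ctr_def cmm_def)
  also have "\<dots> = (\<Sum>i<n. \<Sum>k<n. (cmod (R i k))^2)"
  proof (intro sum.cong refl)
    fix i k assume "i \<in> {..<n}" "k \<in> {..<n}"
    then have "R k i = cnj (R i k)" using chermD[OF H, of i k] by simp
    then show "Re (R i k * R k i) = (cmod (R i k))^2"
      by (simp add: complex_norm_square[symmetric] del: of_real_power)
  qed
  also have "\<dots> \<ge> 0" by (intro sum_nonneg) simp
  finally show ?thesis .
qed

lemma cqf_zero: "(\<And>i. i < n \<Longrightarrow> x i = 0) \<Longrightarrow> cqf n P x = 0"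
  by (simp add: cqf_def cip_def)

lemma cpd_psd: assumes "cpd n P" shows "cpsd n P"
proof -
  have "0 \<le> Re (cqf n P x)" for x
  proof (cases "\<exists>i<n. x i \<noteq> 0")
    case True then show ?thesis using cpdD[OF assms True] by simp
  next
    case False then show ?thesis using cqf_zero[of n x P] by auto
  qed
  then show ?thesis using cpd_herm[OF assms] unfolding cpsd_def by blast
qed

lemma cinv_mv1: assumes "cinv n M R" "i < n" shows "cmv n M (cmv n R x) i = x i"
proof -
  have "cmv n M (cmv n R x) i = cmv n (cmm n M R) x i" by (simp only: cmv_cmm)
  also have "\<dots> = (\<Sum>j<n. cmm n M R i j * x j)" by (simp only: cmv_def)
  also have "\<dots> = (\<Sum>j<n. idm i j * x j)"
    using assms unfolding cinv_def by (intro sum.cong refl) auto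
  also have "\<dots> = x i" using assms(2) by (rule sum_idm_right)
  finally show ?thesis .
qed

lemma cinv_mv2: assumes "cinv n M R" "i < n" shows "cmv n R (cmv n M x) i = x i"
proof -
  have "cmv n R (cmv n M x) i = cmv n (cmm n R M) x i" by (simp only: cmv_cmm)
  also have "\<dots> = (\<Sum>j<n. cmm n R M i j * x j)" by (simp only: cmv_def)
  also have "\<dots> = (\<Sum>j<n. idm i j * x j)"
    using assms unfolding cinv_def by (intro sum.cong refl) auto
  also have "\<dots> = x i" using assms(2) by (rule sum_idm_right)
  finally show ?thesis .
qed

lemma cinv_adj:
  assumes H: "cherm n M" and I: "cinv n M R"
  shows "cip n x (cmv n R y) = cip n (cmv n R x) y"
proof -
  have "cip n x (cmv n R y) = cip n (cmv n M (cmv n R x)) (cmv n R y)"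
    using cinv_mv1[OF I] by (intro cip_cong) auto
  also have "\<dots> = cip n (cmv n R x) (cmv n M (cmv n R y))"
    using cherm_adj[OF H] by simp
  also have "\<dots> = cip n (cmv n R x) y"
    using cinv_mv1[OF I] by (intro cip_cong) auto
  finally show ?thesis .
qed

lemma cinv_herm:
  assumes H: "cherm n M" and I: "cinv n M R"
  shows "cherm n R"
  unfolding cherm_def
proof (intro allI impI)
  fix i j assume i: "i < n" and j: "j < n"
  have "R j i = cip n (ev j) (cmv n R (ev i))" using i j by (simp add: cmv_ev cip_ev)
  also have "\<dots> = cip n (cmv n R (ev j)) (ev i)" by (rule cinv_adj[OF H I])
  also have "\<dots> = cnj (cip n (ev i) (cmv n R (ev j)))" by (rule cip_conj)
  also have "\<dots> = cnj (R i j)" using i j by (simp add: cmv_ev cip_ev)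
  finally show "R j i = cnj (R i j)" .
qed

lemma cinv_psd:
  assumes P: "cpd n M" and I: "cinv n M R"
  shows "cpsd n R"
proof -
  have H: "cherm n M" using P by (rule cpd_herm)
  have "cqf n R x = cqf n M (cmv n R x)" for x
  proof -
    have "cqf n R x = cip n (cmv n M (cmv n R x)) (cmv n R x)"
      unfolding cqf_def using cinv_mv1[OF I] by (intro cip_cong) auto
    also have "\<dots> = cqf n M (cmv n R x)" unfolding cqf_def by (rule cherm_adj[OF H, symmetric])
    finally show ?thesis .
  qed
  then have "0 \<le> Re (cqf n R x)" for x using cpsdD[OF cpd_psd[OF P]] by simp
  then show ?thesis using cinv_herm[OF H I] unfolding cpsd_def by blast
qed

lemma cqf_sandwich:
  assumes H: "cherm n X"
  shows "cqf n (cmm n X (cmm n Y X)) x = cqf n Y (cmv n X x)"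
  unfolding cqf_def cmv_cmm by (rule cherm_adj[OF H])


lemma cpd_inv_exists:
  assumes P: "cpd n B"
  shows "\<exists>R. cinv n B R"
proof -
  define A :: "complex mat" where "A = mat n n (\<lambda>(i,j). B i j)"
  have A: "A \<in> carrier_mat n n" by (simp add: A_def)
  have row: "scalar_prod (row A i) v = (\<Sum>j<n. B i j * vec_index v j)"
    if "i < n" "v \<in> carrier_vec n" for i v
    using that by (simp add: A_def scalar_prod_def atLeast0LessThan)
  have "Determinant.det A \<noteq> 0"
  proof
    assume "Determinant.det A = 0"
    then obtain v where v: "v \<in> carrier_vec n" "v \<noteq> 0\<^sub>v n" "mult_mat_vec A v = 0\<^sub>v n"
      using det_0_iff_vec_prod_zero_field[OF A] by blast
    define x where "x i = vec_index v i" for i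
    have "\<exists>i<n. x i \<noteq> 0"
    proof (rule ccontr)
      assume "\<not> (\<exists>i<n. x i \<noteq> 0)"
      then have "v = 0\<^sub>v n" using v(1) by (intro eq_vecI) (auto simp: x_def)
      then show False using v(2) by simp
    qed
    then have pos: "0 < Re (cqf n B x)" by (rule cpdD[OF P])
    have "cmv n B x i = 0" if "i < n" for i
    proof -
      have "vec_index (mult_mat_vec A v) i = 0" using v(3) that by simp
      then show ?thesis using that A v(1) row[OF that v(1)] by (simp add: cmv_def x_def)
    qed
    then have "cqf n B x = 0" by (simp add: cqf_def cip_def)
    then show False using pos by simp
  qed
  from det_non_zero_imp_unit[OF A this, of "()"]
  obtain Ri where Ri: "Ri \<in> carrier_mat n n" "Ri * A = 1\<^sub>m n" "A * Ri = 1\<^sub>m n"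
    unfolding Units_def ring_mat_def by auto
  define R where "R i j = index_mat Ri (i,j)" for i j
  have "cinv n B R" unfolding cinv_def
  proof (intro allI impI conjI)
    fix i j assume i: "i < n" and j: "j < n"
    have "index_mat (A * Ri) (i,j) = cmm n B R i j"
      using i j A Ri(1) by (simp add: A_def R_def cmm_def scalar_prod_def atLeast0LessThan)
    then show "cmm n B R i j = idm i j" using Ri(3) i j by (simp add: idm_def)
    have "index_mat (Ri * A) (i,j) = cmm n R B i j"
      using i j A Ri(1) by (simp add: A_def R_def cmm_def scalar_prod_def atLeast0LessThan)
    then show "cmm n R B i j = idm i j" using Ri(2) i j by (simp add: idm_def)
  qed
  then show ?thesis by blast
qed


lemma cnrm_nonneg: "0 \<le> cnrm n x"
  by (simp add: cnrm_def sum_nonneg)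

lemma cnrm_pos: "\<exists>i<n. x i \<noteq> 0 \<Longrightarrow> 0 < cnrm n x"
  unfolding cnrm_def by (elim exE conjE, rule sum_pos2[of "{..<n}"]) auto

lemma tr_nonneg_of_qf: "(\<And>x. 0 \<le> Re (cqf n P x)) \<Longrightarrow> 0 \<le> Re (ctr n P)"
  unfolding Re_ctr by (intro sum_nonneg) (metis cqf_ev lessThan_iff)

lemma big_lemma:
  assumes P: "cpd n M" and I: "cinv n M Rl" and t: "Re (ctr n Rl) \<le> 1"
  shows "cnrm n x \<le> Re (cqf n M x)"
proof -
  have H: "cherm n M" using P by (rule cpd_herm)
  have RP: "cpsd n Rl" by (rule cinv_psd[OF P I])
  have qM: "0 \<le> Re (cqf n M x)" using cpsdD[OF cpd_psd[OF P]] .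
  have e1: "cip n x x = cip n x (cmv n Rl (cmv n M x))"
    using cinv_mv2[OF I] by (intro cip_cong) auto
  have e2: "cqf n Rl (cmv n M x) = cnj (cqf n M x)"
  proof -
    have "cqf n Rl (cmv n M x) = cip n (cmv n M x) x"
      unfolding cqf_def using cinv_mv2[OF I] by (intro cip_cong) auto
    also have "\<dots> = cnj (cqf n M x)" unfolding cqf_def by (rule cip_conj)
    finally show ?thesis .
  qed
  have "(cnrm n x)^2 = (cmod (cip n x x))^2" by (simp add: cip_self cnrm_nonneg)
  also have "\<dots> \<le> Re (cqf n Rl x) * Re (cqf n Rl (cmv n M x))"
    unfolding e1 by (rule cpsd_CS[OF RP])
  also have "\<dots> = Re (cqf n Rl x) * Re (cqf n M x)" by (simp add: e2)
  also have "\<dots> \<le> (Re (ctr n Rl) * cnrm n x) * Re (cqf n M x)"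
    by (intro mult_right_mono cpsd_qf_bound[OF RP] qM)
  also have "\<dots> \<le> cnrm n x * Re (cqf n M x)"
  proof (rule mult_right_mono[OF _ qM])
    show "Re (ctr n Rl) * cnrm n x \<le> cnrm n x"
      using t cnrm_nonneg[of n x] cpsd_tr_nonneg[OF RP] by (simp add: mult_left_le_one_le)
  qed
  finally have "(cnrm n x)^2 \<le> cnrm n x * Re (cqf n M x)" .
  then have "cnrm n x * cnrm n x \<le> cnrm n x * Re (cqf n M x)" by (simp add: power2_eq_square)
  then show ?thesis using cnrm_nonneg[of n x] qM
    by (cases "cnrm n x = 0") (simp_all add: mult_le_cancel_left_pos)
qed

definition shm :: "cmat \<Rightarrow> real \<Rightarrow> cmat" where
  "shm M c = (\<lambda>i j. M i j - of_real c * idm i j)"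

lemma cmv_shm: "i < n \<Longrightarrow> cmv n (shm M c) x i = cmv n M x i + (- of_real c) * x i"
proof -
  assume i: "i < n"
  have "cmv n (shm M c) x i = cmv n M x i - of_real c * (\<Sum>j<n. idm i j * x j)"
    by (simp add: cmv_def shm_def left_diff_distrib sum_subtractf sum_distrib_left mult.assoc)
  then show ?thesis using sum_idm_right[OF i] by simp
qed

lemma cqf_shm: "cqf n (shm M c) x = cqf n M x - of_real c * of_real (cnrm n x)"
proof -
  have "cqf n (shm M c) x = cip n x (\<lambda>i. cmv n M x i + (- of_real c) * x i)"
    unfolding cqf_def using cmv_shm by (intro cip_cong) auto
  also have "\<dots> = cqf n M x - of_real c * of_real (cnrm n x)"
    unfolding cip_lin2 cip_self cqf_def by simp
  finally show ?thesis .
qed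

lemma herm_shm: assumes "cherm n M" shows "cherm n (shm M c)"
  unfolding cherm_def
proof (intro allI impI)
  fix i j assume "i < n" "j < n"
  then have "M j i = cnj (M i j)" by (rule chermD[OF assms])
  then show "shm M c j i = cnj (shm M c i j)" by (simp add: shm_def idm_def)
qed

lemma ctr_psd_qf: "(\<And>x. 0 \<le> Re (cqf n P x)) \<Longrightarrow> 0 \<le> Re (ctr n P)"
  by (rule tr_nonneg_of_qf)


lemma cmm_apply: "cmm n A B i j = (\<Sum>k<n. A i k * B k j)"
  by (simp add: cmm_def)

lemma resolvent:
  assumes I: "cinv n M Rl" and IB: "cinv n (shm M c) R" and i: "i < n" and j: "j < n"
  shows "R i j - Rl i j = of_real c * cmm n R Rl i j"
proof -
  have a: "cmm n R (cmm n M Rl) i j = R i j"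
  proof -
    have "cmm n R (cmm n M Rl) i j = (\<Sum>k<n. R i k * cmm n M Rl k j)" by (rule cmm_apply)
    also have "\<dots> = (\<Sum>k<n. R i k * idm k j)" using I j unfolding cinv_def by (intro sum.cong refl) auto
    also have "\<dots> = R i j" using j by (rule sum_idm_left)
    finally show ?thesis .
  qed
  have b: "cmm n R (cmm n (shm M c) Rl) i j = Rl i j"
  proof -
    have "cmm n R (cmm n (shm M c) Rl) i j = cmm n (cmm n R (shm M c)) Rl i j" by (simp only: cmm_assoc)
    also have "\<dots> = (\<Sum>k<n. cmm n R (shm M c) i k * Rl k j)" by (rule cmm_apply)
    also have "\<dots> = (\<Sum>k<n. idm i k * Rl k j)" using IB i unfolding cinv_def by (intro sum.cong refl) auto
    also have "\<dots> = Rl i j" using i by (rule sum_idm_right)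
    finally show ?thesis .
  qed
  have d: "cmm n M Rl k j - cmm n (shm M c) Rl k j = of_real c * Rl k j" if k: "k < n" for k
  proof -
    have "cmm n M Rl k j - cmm n (shm M c) Rl k j = (\<Sum>l<n. of_real c * (idm k l * Rl l j))"
      unfolding cmm_apply by (simp add: shm_def sum_subtractf[symmetric] algebra_simps)
    also have "\<dots> = of_real c * Rl k j" using sum_idm_right[OF k, of "\<lambda>l. Rl l j"]
      by (simp add: sum_distrib_left[symmetric])
    finally show ?thesis .
  qed
  have "cmm n R (cmm n M Rl) i j - cmm n R (cmm n (shm M c) Rl) i j
      = (\<Sum>k<n. R i k * (cmm n M Rl k j - cmm n (shm M c) Rl k j))"
    unfolding cmm_apply[of n R] by (simp add: sum_subtractf right_diff_distrib)
  also have "\<dots> = (\<Sum>k<n. R i k * (of_real c * Rl k j))" by (intro sum.cong refl) (simp add: d)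
  also have "\<dots> = of_real c * cmm n R Rl i j" by (simp add: cmm_apply sum_distrib_left algebra_simps)
  finally show ?thesis using a b by simp
qed

lemma step_LA:
  assumes P: "cpd n M" and I: "cinv n M Rl" and t: "Re (ctr n Rl) \<le> 1"
  shows "\<exists>R. cpd n (shm M (1/4)) \<and> cinv n (shm M (1/4)) R \<and>
     0 \<le> Re (ctr n (cmm n R R)) - (Re (ctr n R) - Re (ctr n Rl)) * (1 + Re (ctr n R))"
proof -
  define B where "B = shm M (1/4)"
  have HM: "cherm n M" using P by (rule cpd_herm)
  have PB: "cpd n B" unfolding cpd_def
  proof (intro conjI allI impI)
    show "cherm n B" unfolding B_def by (rule herm_shm[OF HM])
    fix x :: cvec assume x: "\<exists>i<n. x i \<noteq> 0"
    have "cnrm n x \<le> Re (cqf n M x)" by (rule big_lemma[OF P I t])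
    moreover have "0 < cnrm n x" by (rule cnrm_pos[OF x])
    moreover have "Re (cqf n B x) = Re (cqf n M x) - 1/4 * cnrm n x" by (simp add: B_def cqf_shm)
    ultimately show "0 < Re (cqf n B x)" by simp
  qed
  obtain R where IB: "cinv n B R" using cpd_inv_exists[OF PB] by blast
  have HR: "cherm n R" by (rule cinv_herm[OF cpd_herm[OF PB] IB])
  have PR: "cpsd n R" by (rule cinv_psd[OF PB IB])
  have PRl: "cpsd n Rl" by (rule cinv_psd[OF P I])
  have res: "R i j - Rl i j = of_real (1/4) * cmm n R Rl i j" if "i < n" "j < n" for i j
    using resolvent[OF I IB[unfolded B_def] that] .
  have tr1: "ctr n R - ctr n Rl = of_real (1/4) * ctr n (cmm n R Rl)"
    unfolding ctr_def sum_subtractf[symmetric] sum_distrib_left by (intro sum.cong refl) (simp add: res)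
  have tr2: "ctr n (cmm n R R) - ctr n (cmm n R Rl) = of_real (1/4) * ctr n (cmm n R (cmm n R Rl))"
  proof -
    have "ctr n (cmm n R R) - ctr n (cmm n R Rl) = (\<Sum>i<n. \<Sum>k<n. R i k * (R k i - Rl k i))"
      unfolding ctr_def cmm_apply by (simp add: sum_subtractf[symmetric] right_diff_distrib)
    also have "\<dots> = (\<Sum>i<n. \<Sum>k<n. R i k * (of_real (1/4) * cmm n R Rl k i))"
      by (intro sum.cong refl) (simp add: res)
    also have "\<dots> = of_real (1/4) * ctr n (cmm n R (cmm n R Rl))"
      unfolding ctr_def cmm_apply[of n R "cmm n R Rl"] by (simp add: sum_distrib_left algebra_simps)
    finally show ?thesis .
  qed
  have tr3: "ctr n (cmm n R (cmm n R Rl)) = ctr n (cmm n R (cmm n Rl R))"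
    by (simp add: ctr_comm[of n R "cmm n R Rl"] cmm_assoc)
  have nn: "0 \<le> Re (ctr n (cmm n R (cmm n Rl R)))"
    by (rule tr_nonneg_of_qf) (simp add: cqf_sandwich[OF HR] cpsdD[OF PRl])
  define a where "a = Re (ctr n R)"
  define b where "b = Re (ctr n Rl)"
  define p where "p = Re (ctr n (cmm n R Rl))"
  define T where "T = Re (ctr n (cmm n R R))"
  have e1: "a - b = p / 4" using arg_cong[OF tr1, of Re] by (simp add: a_def b_def p_def)
  have e2: "p \<le> T" using arg_cong[OF tr2, of Re] nn tr3 by (simp add: p_def T_def)
  have e3: "p \<le> a * b" unfolding p_def a_def b_def by (rule cpsd_tr_mult[OF PR PRl])
  have a0: "0 \<le> a" unfolding a_def by (rule cpsd_tr_nonneg[OF PR])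
  have T0: "0 \<le> T" unfolding T_def by (rule herm_tr_sq_nonneg[OF HR])
  have b1: "b \<le> 1" using t by (simp add: b_def)
  have "a * b \<le> a" using mult_left_mono[OF b1 a0] by simp
  then have a43: "a \<le> 4/3" using e1 e3 b1 by linarith
  have "(a - b) * (1 + a) \<le> (T / 4) * (1 + a)" using e1 e2 a0 by (intro mult_right_mono) auto
  also have "\<dots> \<le> (T / 4) * (7 / 3)" using a43 T0 by (intro mult_left_mono) auto
  finally have "(a - b) * (1 + a) \<le> T * 7 / 12" by simp
  then have "0 \<le> T - (a - b) * (1 + a)" using T0 by linarith
  then show ?thesis using PB IB unfolding B_def a_def b_def T_def by blast
qed


lemma sum_expand_a:
  fixes a b r c :: "nat \<Rightarrow> complex"
  shows "(\<Sum>k<n. (a k + p * b k) * (r k - c k * s)) = (\<Sum>k<n. a k * r k) + p * (\<Sum>k<n. b k * r k)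
     - (\<Sum>k<n. a k * c k) * s - p * (\<Sum>k<n. b k * c k) * s"
proof -
  have "(\<Sum>k<n. (a k + p * b k) * (r k - c k * s))
     = (\<Sum>k<n. a k * r k + p * (b k * r k) - (a k * c k) * s - p * (b k * c k) * s)"
    by (intro sum.cong refl) (simp add: algebra_simps)
  also have "\<dots> = (\<Sum>k<n. a k * r k) + p * (\<Sum>k<n. b k * r k)
     - (\<Sum>k<n. a k * c k) * s - p * (\<Sum>k<n. b k * c k) * s"
    by (simp add: sum.distrib sum_subtractf sum_distrib_left sum_distrib_right)
  finally show ?thesis .
qed

lemma sum_expand_b:
  fixes a b r c :: "nat \<Rightarrow> complex"
  shows "(\<Sum>k<n. (r k - s * c k) * (a k + b k * p)) = (\<Sum>k<n. r k * a k) + (\<Sum>k<n. r k * b k) * p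
     - s * (\<Sum>k<n. c k * a k) - s * (\<Sum>k<n. c k * b k) * p"
proof -
  have "(\<Sum>k<n. (r k - s * c k) * (a k + b k * p))
     = (\<Sum>k<n. r k * a k + (r k * b k) * p - s * (c k * a k) - s * (c k * b k) * p)"
    by (intro sum.cong refl) (simp add: algebra_simps)
  also have "\<dots> = (\<Sum>k<n. r k * a k) + (\<Sum>k<n. r k * b k) * p
     - s * (\<Sum>k<n. c k * a k) - s * (\<Sum>k<n. c k * b k) * p"
    by (simp add: sum.distrib sum_subtractf sum_distrib_left sum_distrib_right)
  finally show ?thesis .
qed

lemma step_SM:
  assumes PB: "cpd n B" and IB: "cinv n B R"
    and g: "(Re (ctr n R) - c) * (1 + Re (cqf n R v)) \<le> Re (cqf n (cmm n R R) v)"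
  shows "cpd n (\<lambda>i j. B i j + v i * cnj (v j)) \<and>
    (\<exists>R'. cinv n (\<lambda>i j. B i j + v i * cnj (v j)) R' \<and> Re (ctr n R') \<le> c)"
proof -
  define M' where "M' = (\<lambda>i j. B i j + v i * cnj (v j))"
  have HB: "cherm n B" using PB by (rule cpd_herm)
  have HR: "cherm n R" by (rule cinv_herm[OF HB IB])
  have PR: "cpsd n R" by (rule cinv_psd[OF PB IB])
  define y where "y = cmv n R v"
  define q where "q = Re (cqf n R v)"
  have q0: "0 \<le> q" unfolding q_def by (rule cpsdD[OF PR])
  have qc: "cqf n R v = of_real q" unfolding q_def by (rule cqf_real[OF HR])
  define d where "d = 1 + q"
  have d0: "0 < d" using q0 by (simp add: d_def)
  have dc: "(of_real d :: complex) \<noteq> 0" using d0 by simp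
  define R' where "R' = (\<lambda>i j. R i j - y i * (cnj (y j) / of_real d))"
  have S1: "(\<Sum>k<n. cnj (v k) * R k j) = cnj (y j)" if j: "j < n" for j
  proof -
    have "cnj (y j) = (\<Sum>k<n. cnj (R j k) * cnj (v k))" by (simp add: y_def cmv_def)
    also have "\<dots> = (\<Sum>k<n. cnj (v k) * R k j)"
    proof (intro sum.cong refl)
      fix k assume "k \<in> {..<n}"
      then have "R k j = cnj (R j k)" using chermD[OF HR j, of k] by simp
      then show "cnj (R j k) * cnj (v k) = cnj (v k) * R k j" by simp
    qed
    finally show ?thesis by simp
  qed
  have S2: "(\<Sum>k<n. B i k * y k) = v i" if i: "i < n" for i
    using cinv_mv1[OF IB i, of v] by (simp add: cmv_def y_def)
  have S3: "(\<Sum>k<n. cnj (v k) * y k) = of_real q"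
    using qc by (simp add: cqf_def cip_def y_def)
  have S4: "(\<Sum>k<n. cnj (y k) * B k j) = cnj (v j)" if j: "j < n" for j
  proof -
    have "cnj (v j) = (\<Sum>k<n. cnj (B j k) * cnj (y k))" using S2[OF j] by (simp flip: S2[OF j])
    also have "\<dots> = (\<Sum>k<n. cnj (y k) * B k j)"
    proof (intro sum.cong refl)
      fix k assume "k \<in> {..<n}"
      then have "B k j = cnj (B j k)" using chermD[OF HB j, of k] by simp
      then show "cnj (B j k) * cnj (y k) = cnj (y k) * B k j" by simp
    qed
    finally show ?thesis by simp
  qed
  have S5: "(\<Sum>k<n. cnj (y k) * v k) = of_real q"
  proof -
    have "(\<Sum>k<n. cnj (y k) * v k) = cip n y v" by (simp add: cip_def)
    also have "\<dots> = cnj (cip n v y)" by (rule cip_conj)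
    also have "cip n v y = of_real q" using qc by (simp add: cqf_def y_def)
    finally show ?thesis by simp
  qed
  have inv: "cinv n M' R'" unfolding cinv_def
  proof (intro allI impI conjI)
    fix i j assume i: "i < n" and j: "j < n"
    have BR: "(\<Sum>k<n. B i k * R k j) = idm i j" using IB i j unfolding cinv_def cmm_apply by blast
    have "cmm n M' R' i j = (\<Sum>k<n. (B i k + v i * cnj (v k)) * (R k j - y k * (cnj (y j) / of_real d)))"
      by (simp add: cmm_apply M'_def R'_def)
    also have "\<dots> = idm i j + v i * cnj (y j) - v i * (cnj (y j) / of_real d)
        - v i * of_real q * (cnj (y j) / of_real d)"
      unfolding sum_expand_a BR S1[OF j] S2[OF i] S3 ..
    also have "\<dots> = idm i j"
    proof -
      obtain w where w: "w = cnj (y j) / of_real d" by blast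
      have yj: "cnj (y j) = w * (1 + of_real q)" using dc by (simp add: w d_def)
      show ?thesis unfolding w[symmetric] unfolding yj by (simp add: algebra_simps)
    qed
    finally show "cmm n M' R' i j = idm i j" .
    have RB: "(\<Sum>k<n. R i k * B k j) = idm i j" using IB i j unfolding cinv_def cmm_apply by blast
    have Rv: "(\<Sum>k<n. R i k * v k) = y i" by (simp add: y_def cmv_def)
    have "cmm n R' M' i j = (\<Sum>k<n. (R i k - (y i / of_real d) * cnj (y k)) * (B k j + v k * cnj (v j)))"
      by (simp add: cmm_apply M'_def R'_def)
    also have "\<dots> = idm i j + y i * cnj (v j) - (y i / of_real d) * cnj (v j)
        - (y i / of_real d) * of_real q * cnj (v j)"
      unfolding sum_expand_b RB Rv S4[OF j] S5 ..
    also have "\<dots> = idm i j"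
    proof -
      obtain w where w: "w = y i / of_real d" by blast
      have yi: "y i = w * (1 + of_real q)" using dc by (simp add: w d_def)
      show ?thesis unfolding w[symmetric] unfolding yi by (simp add: algebra_simps)
    qed
    finally show "cmm n R' M' i j = idm i j" .
  qed
  have cRR: "cqf n (cmm n R R) v = of_real (cnrm n y)"
  proof -
    have "cqf n (cmm n R R) v = cip n v (cmv n R y)" by (simp add: cqf_def cmv_cmm y_def)
    also have "\<dots> = cip n y y" unfolding y_def by (rule cherm_adj[OF HR])
    finally show ?thesis by (simp add: cip_self)
  qed
  have trR': "Re (ctr n R') = Re (ctr n R) - cnrm n y / d"
  proof -
    have "ctr n R' = ctr n R - (\<Sum>i<n. cnj (y i) * y i) / of_real d"
      by (simp add: ctr_def R'_def sum_subtractf sum_divide_distrib mult.commute)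
    also have "(\<Sum>i<n. cnj (y i) * y i) = of_real (cnrm n y)" using cip_self[of n y] by (simp add: cip_def)
    finally show ?thesis by simp
  qed
  have "(Re (ctr n R) - c) * d \<le> cnrm n y" using g cRR by (simp add: d_def q_def)
  then have "Re (ctr n R) - c \<le> cnrm n y / d" using d0 by (simp add: field_simps)
  then have tr: "Re (ctr n R') \<le> c" using trR' by simp
  have HM': "cherm n M'" unfolding cherm_def
  proof (intro allI impI)
    fix i j assume "i < n" "j < n"
    then have "B j i = cnj (B i j)" by (rule chermD[OF HB])
    then show "M' j i = cnj (M' i j)" by (simp add: M'_def)
  qed
  have "cpd n M'" unfolding cpd_def
  proof (intro conjI allI impI HM')
    fix x :: cvec assume x: "\<exists>i<n. x i \<noteq> 0"
    have mv: "cmv n M' x = (\<lambda>i. cmv n B x i + cip n v x * v i)"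
    proof (rule ext)
      fix i
      have "cmv n M' x i = (\<Sum>j<n. B i j * x j + v i * (cnj (v j) * x j))"
        by (simp add: M'_def cmv_def distrib_right mult.assoc)
      also have "\<dots> = (\<Sum>j<n. B i j * x j) + v i * (\<Sum>j<n. cnj (v j) * x j)"
        by (simp add: sum.distrib sum_distrib_left)
      also have "\<dots> = cmv n B x i + cip n v x * v i" by (simp add: cmv_def cip_def mult.commute)
      finally show "cmv n M' x i = cmv n B x i + cip n v x * v i" .
    qed
    have "cqf n M' x = cqf n B x + cip n v x * cip n x v"
      unfolding cqf_def mv cip_lin2 ..
    also have "cip n x v = cnj (cip n v x)" by (rule cip_conj)
    finally have "Re (cqf n M' x) = Re (cqf n B x) + (cmod (cip n v x))^2"
      by (simp add: complex_norm_square[symmetric] del: of_real_power)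
    moreover have "0 < Re (cqf n B x)" by (rule cpdD[OF PB x])
    ultimately show "0 < Re (cqf n M' x)" by (smt (verit) zero_le_power2)
  qed
  then show ?thesis using inv tr unfolding M'_def by blast
qed


definition rk :: "(nat \<Rightarrow> (nat \<Rightarrow> real) \<Rightarrow> complex) \<Rightarrow> (nat \<Rightarrow> (nat \<Rightarrow> real)) \<Rightarrow> nat \<Rightarrow> cmat" where
  "rk u \<xi> k = (\<lambda>i j. \<Sum>p<k. u i (\<xi> p) * cnj (u j (\<xi> p)))"

lemma cqf_rk: "cqf n (rk u \<xi> k) x = (\<Sum>p<k. cip n x (\<lambda>i. u i (\<xi> p)) * cnj (cip n x (\<lambda>i. u i (\<xi> p))))"
proof -
  have "cqf n (rk u \<xi> k) x = (\<Sum>i<n. \<Sum>j<n. \<Sum>p<k. (cnj (x i) * u i (\<xi> p)) * (x j * cnj (u j (\<xi> p))))"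
    by (simp add: cqf_def cip_def cmv_def rk_def sum_distrib_left sum_distrib_right mult_ac)
  also have "\<dots> = (\<Sum>i<n. \<Sum>p<k. \<Sum>j<n. (cnj (x i) * u i (\<xi> p)) * (x j * cnj (u j (\<xi> p))))"
    by (rule sum.cong[OF refl]) (rule sum.swap)
  also have "\<dots> = (\<Sum>p<k. \<Sum>i<n. \<Sum>j<n. (cnj (x i) * u i (\<xi> p)) * (x j * cnj (u j (\<xi> p))))"
    by (rule sum.swap)
  also have "\<dots> = (\<Sum>p<k. (\<Sum>i<n. cnj (x i) * u i (\<xi> p)) * (\<Sum>j<n. x j * cnj (u j (\<xi> p))))"
    by (simp add: sum_product)
  also have "\<dots> = (\<Sum>p<k. cip n x (\<lambda>i. u i (\<xi> p)) * cnj (cip n x (\<lambda>i. u i (\<xi> p))))"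
    by (simp add: cip_def)
  finally show ?thesis .
qed

locale dsetting =
  fixes \<Omega> :: "(nat \<Rightarrow> real) set" and \<mu> :: "(nat \<Rightarrow> real) measure"
    and u :: "nat \<Rightarrow> (nat \<Rightarrow> real) \<Rightarrow> complex" and n :: nat
  assumes cpt: "compact \<Omega>" and ps: "prob_space \<mu>"
    and sets_mu: "sets \<mu> = sets (restrict_space borel \<Omega>)"
    and cont: "\<And>i. i < n \<Longrightarrow> continuous_on \<Omega> (u i)"
    and orth: "\<And>i j. i < n \<Longrightarrow> j < n \<Longrightarrow>
       integral\<^sup>L \<mu> (\<lambda>x. u i x * cnj (u j x)) = (if i = j then 1 else 0)"
begin

lemma space_mu: "space \<mu> = \<Omega>"
  using sets_eq_imp_space_eq[OF sets_mu] by (simp add: space_restrict_space)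

lemma integrable_cont:
  fixes h :: "(nat \<Rightarrow> real) \<Rightarrow> 'b::{banach,second_countable_topology}"
  assumes h: "continuous_on \<Omega> h"
  shows "integrable \<mu> h"
proof -
  interpret prob_space \<mu> by (rule ps)
  have mc: "measurable \<mu> borel = measurable (restrict_space borel \<Omega>) borel"
    by (rule measurable_cong_sets[OF sets_mu refl])
  have meas: "h \<in> borel_measurable \<mu>"
    using borel_measurable_continuous_on_restrict[OF h] unfolding mc .
  obtain B where B: "\<forall>y\<in>h ` \<Omega>. norm y \<le> B"
    using compact_imp_bounded[OF compact_continuous_image[OF h cpt]] unfolding bounded_iff by blast
  have "AE x in \<mu>. norm (h x) \<le> B" using B space_mu by (intro AE_I2) auto
  then show ?thesis using meas by (rule integrable_const_bound)
qed

lemma cqf_uv: "cqf n P (\<lambda>i. u i x) = (\<Sum>i<n. \<Sum>j<n. P i j * (cnj (u i x) * u j x))"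
  by (simp add: cqf_def cip_def cmv_def sum_distrib_left mult_ac)

lemma cont_qf: "continuous_on \<Omega> (\<lambda>x. cqf n P (\<lambda>i. u i x))"
  unfolding cqf_uv by (intro continuous_intros) (auto intro: cont)

lemma int_qf: "integrable \<mu> (\<lambda>x. cqf n P (\<lambda>i. u i x))"
  by (rule integrable_cont[OF cont_qf])

lemma integral_qf: "integral\<^sup>L \<mu> (\<lambda>x. cqf n P (\<lambda>i. u i x)) = ctr n P"
proof -
  have ij: "integrable \<mu> (\<lambda>x. P i j * (cnj (u i x) * u j x))" if "i < n" "j < n" for i j
    using that by (intro integrable_cont continuous_intros cont)
  have e: "integral\<^sup>L \<mu> (\<lambda>x. cnj (u i x) * u j x) = (if i = j then 1 else 0)" if "i < n" "j < n" for i j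
  proof -
    have "integral\<^sup>L \<mu> (\<lambda>x. cnj (u i x) * u j x) = integral\<^sup>L \<mu> (\<lambda>x. cnj (u i x * cnj (u j x)))" by simp
    also have "\<dots> = cnj (integral\<^sup>L \<mu> (\<lambda>x. u i x * cnj (u j x)))" by (rule Bochner_Integration.integral_cnj)
    finally show ?thesis using orth[OF that] by simp
  qed
  have "integral\<^sup>L \<mu> (\<lambda>x. cqf n P (\<lambda>i. u i x))
      = (\<Sum>i<n. \<Sum>j<n. integral\<^sup>L \<mu> (\<lambda>x. P i j * (cnj (u i x) * u j x)))"
    unfolding cqf_uv
  proof -
    have "integral\<^sup>L \<mu> (\<lambda>x. \<Sum>i<n. \<Sum>j<n. P i j * (cnj (u i x) * u j x))
       = (\<Sum>i<n. integral\<^sup>L \<mu> (\<lambda>x. \<Sum>j<n. P i j * (cnj (u i x) * u j x)))"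
      by (rule Bochner_Integration.integral_sum) (auto intro!: Bochner_Integration.integrable_sum ij)
    also have "\<dots> = (\<Sum>i<n. \<Sum>j<n. integral\<^sup>L \<mu> (\<lambda>x. P i j * (cnj (u i x) * u j x)))"
      by (intro sum.cong refl Bochner_Integration.integral_sum) (auto intro: ij)
    finally show "integral\<^sup>L \<mu> (\<lambda>x. \<Sum>i<n. \<Sum>j<n. P i j * (cnj (u i x) * u j x))
       = (\<Sum>i<n. \<Sum>j<n. integral\<^sup>L \<mu> (\<lambda>x. P i j * (cnj (u i x) * u j x)))" .
  qed
  also have "\<dots> = (\<Sum>i<n. \<Sum>j<n. P i j * (if i = j then 1 else 0))"
    by (intro sum.cong refl) (simp add: e)
  also have "\<dots> = ctr n P" unfolding ctr_def
  proof (intro sum.cong refl)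
    fix i assume i: "i \<in> {..<n}"
    have "(\<Sum>j<n. P i j * (if i = j then 1 else 0)) = (\<Sum>j<n. if i = j then P i j else 0)"
      by (rule sum.cong) auto
    then show "(\<Sum>j<n. P i j * (if i = j then 1 else 0)) = P i i" using i by simp
  qed
  finally show ?thesis .
qed

lemma exists_point:
  assumes h: "0 \<le> Re (ctr n (cmm n R R)) - D * (1 + Re (ctr n R))"
  shows "\<exists>x\<in>\<Omega>. D * (1 + Re (cqf n R (\<lambda>i. u i x))) \<le> Re (cqf n (cmm n R R) (\<lambda>i. u i x))"
proof (rule ccontr)
  interpret prob_space \<mu> by (rule ps)
  assume "\<not> ?thesis"
  then have lt: "\<forall>x\<in>space \<mu>. Re (cqf n (cmm n R R) (\<lambda>i. u i x)) - D * (1 + Re (cqf n R (\<lambda>i. u i x))) < 0"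
    using space_mu by auto
  define G where "G x = Re (cqf n (cmm n R R) (\<lambda>i. u i x)) - D * (1 + Re (cqf n R (\<lambda>i. u i x)))" for x
  have i1: "integrable \<mu> (\<lambda>x. Re (cqf n (cmm n R R) (\<lambda>i. u i x)))" using int_qf by simp
  have i2: "integrable \<mu> (\<lambda>x. Re (cqf n R (\<lambda>i. u i x)))" using int_qf by simp
  have iG: "integrable \<mu> G" unfolding G_def using i1 i2 by (intro Bochner_Integration.integrable_diff integrable_mult_right Bochner_Integration.integrable_add) auto
  have "integral\<^sup>L \<mu> G = Re (ctr n (cmm n R R)) - D * (1 + Re (ctr n R))"
    unfolding G_def using i1 i2
    by (simp add: Bochner_Integration.integral_diff Bochner_Integration.integral_add integral_qf int_qf prob_space)
  moreover have "integral\<^sup>L \<mu> G < integral\<^sup>L \<mu> (\<lambda>x. 0)"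
    using lt iG by (intro integral_less_AE_space) (auto simp: G_def emeasure_space_1)
  ultimately show False using h by simp
qed


lemma construct:
  assumes n0: "0 < n"
  shows "\<exists>\<xi>. (\<forall>j<k. \<xi> j \<in> \<Omega>) \<and> cpd n (shm (rk u \<xi> k) (- real n + real k / 4)) \<and>
     (\<exists>R. cinv n (shm (rk u \<xi> k) (- real n + real k / 4)) R \<and> Re (ctr n R) \<le> 1)"
proof (induction k)
  case 0
  define \<xi> :: "nat \<Rightarrow> nat \<Rightarrow> real" where "\<xi> = (\<lambda>_. undefined)"
  define M where "M = shm (rk u \<xi> 0) (- real n + real 0 / 4)"
  have M: "M = (\<lambda>i j. of_real (real n) * idm i j)" by (simp add: M_def rk_def shm_def fun_eq_iff)
  have z: "cqf n (rk u \<xi> 0) x = 0" for x by (simp add: cqf_rk)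
  have herm0: "cherm n (rk u \<xi> 0)" by (simp add: cherm_def rk_def)
  have pd: "cpd n M" unfolding cpd_def
  proof (intro conjI allI impI)
    show "cherm n M" unfolding M_def by (rule herm_shm[OF herm0])
    fix x :: cvec assume x: "\<exists>i<n. x i \<noteq> 0"
    have "Re (cqf n M x) = real n * cnrm n x" by (simp add: M_def cqf_shm z)
    then show "0 < Re (cqf n M x)" using cnrm_pos[OF x] n0 by simp
  qed
  define R0 where "R0 = (\<lambda>i j. of_real (1 / real n) * idm i j)"
  have inv: "cinv n M R0" unfolding cinv_def
  proof (intro allI impI conjI)
    fix i j assume i: "i < n" and j: "j < n"
    have "cmm n M R0 i j = of_real (real n) * of_real (1 / real n) * (\<Sum>k<n. idm i k * idm k j)"
      by (simp add: M R0_def cmm_apply sum_distrib_left mult_ac)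
    also have "\<dots> = idm i j" using n0 sum_idm_right[OF i, of "\<lambda>k. idm k j"] by simp
    finally show "cmm n M R0 i j = idm i j" .
    have "cmm n R0 M i j = of_real (real n) * of_real (1 / real n) * (\<Sum>k<n. idm i k * idm k j)"
      by (simp add: M R0_def cmm_apply sum_distrib_left mult_ac)
    also have "\<dots> = idm i j" using n0 sum_idm_right[OF i, of "\<lambda>k. idm k j"] by simp
    finally show "cmm n R0 M i j = idm i j" .
  qed
  have "Re (ctr n R0) = 1" using n0 by (simp add: R0_def ctr_def idm_def)
  then show ?case using pd inv unfolding M_def by (intro exI[of _ \<xi>]) auto
next
  case (Suc k)
  define l where "l = - real n + real k / 4"
  from Suc.IH obtain \<xi> Rl where \<xi>: "\<forall>j<k. \<xi> j \<in> \<Omega>" and P: "cpd n (shm (rk u \<xi> k) l)"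
    and I: "cinv n (shm (rk u \<xi> k) l) Rl" and t: "Re (ctr n Rl) \<le> 1"
    unfolding l_def by blast
  define M where "M = shm (rk u \<xi> k) l"
  obtain R where PB: "cpd n (shm M (1/4))" and IB: "cinv n (shm M (1/4)) R"
    and ineq: "0 \<le> Re (ctr n (cmm n R R)) - (Re (ctr n R) - Re (ctr n Rl)) * (1 + Re (ctr n R))"
    using step_LA[OF P[folded M_def] I[folded M_def] t] by blast
  obtain x where x: "x \<in> \<Omega>" and g: "(Re (ctr n R) - Re (ctr n Rl)) * (1 + Re (cqf n R (\<lambda>i. u i x)))
      \<le> Re (cqf n (cmm n R R) (\<lambda>i. u i x))"
    using exists_point[OF ineq] by blast
  obtain R' where PM': "cpd n (\<lambda>i j. shm M (1/4) i j + u i x * cnj (u j x))"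
    and IM': "cinv n (\<lambda>i j. shm M (1/4) i j + u i x * cnj (u j x)) R'" and t': "Re (ctr n R') \<le> Re (ctr n Rl)"
    using step_SM[OF PB IB g] by blast
  define \<xi>' where "\<xi>' = \<xi>(k := x)"
  have eq: "shm (rk u \<xi>' (Suc k)) (- real n + real (Suc k) / 4) = (\<lambda>i j. shm M (1/4) i j + u i x * cnj (u j x))"
  proof (intro ext)
    fix i j
    have "rk u \<xi>' (Suc k) i j = rk u \<xi> k i j + u i x * cnj (u j x)"
      unfolding rk_def \<xi>'_def by (simp add: sum.lessThan_Suc)
    then show "shm (rk u \<xi>' (Suc k)) (- real n + real (Suc k) / 4) i j = shm M (1/4) i j + u i x * cnj (u j x)"
      by (simp add: shm_def M_def l_def algebra_simps)
  qed
  have "\<forall>j<Suc k. \<xi>' j \<in> \<Omega>" using \<xi> x by (simp add: \<xi>'_def less_Suc_eq)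
  then show ?case using PM' IM' t' t unfolding eq[symmetric] by (intro exI[of _ \<xi>']) auto
qed

lemma key:
  "\<exists>\<xi>. (\<forall>j<8*n. \<xi> j \<in> \<Omega>) \<and>
     (\<forall>c. real n * (\<Sum>i<n. (cmod (c i))^2) \<le> (\<Sum>p<8*n. (cmod (\<Sum>i<n. c i * u i (\<xi> p)))^2))"
proof (cases "n = 0")
  case True
  then show ?thesis by simp
next
  case False
  then have n0: "0 < n" by simp
  obtain \<xi> where \<xi>: "\<forall>j<8*n. \<xi> j \<in> \<Omega>" and P: "cpd n (shm (rk u \<xi> (8*n)) (- real n + real (8*n) / 4))"
    using construct[OF n0, of "8*n"] by blast
  have P': "cpd n (shm (rk u \<xi> (8*n)) (real n))" using P by simp
  have "real n * (\<Sum>i<n. (cmod (c i))^2) \<le> (\<Sum>p<8*n. (cmod (\<Sum>i<n. c i * u i (\<xi> p)))^2)" for c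
  proof -
    define x where "x = (\<lambda>i. cnj (c i))"
    have cx: "cip n x (\<lambda>i. u i (\<xi> p)) = (\<Sum>i<n. c i * u i (\<xi> p))" for p by (simp add: cip_def x_def)
    have "0 \<le> Re (cqf n (shm (rk u \<xi> (8*n)) (real n)) x)" by (rule cpsdD[OF cpd_psd[OF P']])
    also have "Re (cqf n (shm (rk u \<xi> (8*n)) (real n)) x)
       = (\<Sum>p<8*n. (cmod (\<Sum>i<n. c i * u i (\<xi> p)))^2) - real n * (\<Sum>i<n. (cmod (c i))^2)"
    proof -
      have "cqf n (rk u \<xi> (8*n)) x = (\<Sum>p<8*n. of_real ((cmod (\<Sum>i<n. c i * u i (\<xi> p)))^2))"
        unfolding cqf_rk cx by (intro sum.cong refl) (simp only: of_real_power complex_norm_square[symmetric])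
      moreover have "cnrm n x = (\<Sum>i<n. (cmod (c i))^2)" by (simp add: cnrm_def x_def)
      ultimately show ?thesis unfolding cqf_shm by simp
    qed
    finally show ?thesis by simp
  qed
  then show ?thesis using \<xi> by blast
qed

end


lemma main_lemma:
  fixes \<Omega> :: "(nat \<Rightarrow> real) set" and \<mu> :: "(nat \<Rightarrow> real) measure"
    and X :: "((nat \<Rightarrow> real) \<Rightarrow> complex) set" and N :: nat
    and u :: "nat \<Rightarrow> (nat \<Rightarrow> real) \<Rightarrow> complex"
  assumes cpt: "compact \<Omega>" and ps: "prob_space \<mu>" and sm: "sets \<mu> = sets (restrict_space borel \<Omega>)"
    and contX: "\<forall>f\<in>X. continuous_on \<Omega> f" and uX: "\<forall>i<N. u i \<in> X"
    and orth: "\<forall>i<N. \<forall>j<N. integral\<^sup>L \<mu> (\<lambda>x. u i x * cnj (u j x)) = (if i = j then 1 else 0)"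
    and span: "\<forall>f\<in>X. \<exists>c::nat \<Rightarrow> complex. \<forall>x\<in>\<Omega>. f x = (\<Sum>i<N. c i * u i x)"
  shows "let w = (\<lambda>x. sqrt (\<Sum>i<N. (cmod (u i x))\<^sup>2)) in
      \<exists>(m::nat) (\<xi>::nat \<Rightarrow> (nat \<Rightarrow> real)).
        real m \<le> 8 * real N \<and> (\<forall>j<m. \<xi> j \<in> \<Omega>) \<and>
        (\<forall>f\<in>X.
           (\<forall>x\<in>\<Omega>. w x > 0 \<longrightarrow> cmod (f x) / w x \<le> 3 * max_abs_pts f \<xi> m) \<and>
           (SUP x\<in>\<Omega>. cmod (f x)) \<le> 3 * (SUP x\<in>\<Omega>. w x) * max_abs_pts f \<xi> m)"
proof -
  have cont: "continuous_on \<Omega> (u i)" if "i < N" for i using contX uX that by blast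
  have DS: "dsetting \<Omega> \<mu> u N" unfolding dsetting_def using cpt ps sm cont orth by blast
  interpret D: dsetting \<Omega> \<mu> u N by (rule DS)
  obtain \<xi> where \<xi>\<Omega>: "\<forall>j<8*N. \<xi> j \<in> \<Omega>"
    and samp: "\<And>c. real N * (\<Sum>i<N. (cmod (c i))^2) \<le> (\<Sum>p<8*N. (cmod (\<Sum>i<N. c i * u i (\<xi> p)))^2)"
    using D.key by blast
  have \<Omega>ne: "\<Omega> \<noteq> {}" using prob_space.not_empty[OF ps] D.space_mu by simp
  define w where "w = (\<lambda>x. sqrt (\<Sum>i<N. (cmod (u i x))\<^sup>2))"
  have wcont: "continuous_on \<Omega> w" unfolding w_def by (intro continuous_intros) (auto intro: cont)
  have bdd: "bdd_above (w ` \<Omega>)"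
    by (rule bounded_imp_bdd_above, rule compact_imp_bounded, rule compact_continuous_image[OF wcont cpt])
  have w0: "0 \<le> w x" for x unfolding w_def by (simp add: sum_nonneg)
  have w2: "(w x)^2 = (\<Sum>i<N. (cmod (u i x))\<^sup>2)" for x unfolding w_def by (simp add: sum_nonneg)
  have core: "(\<forall>x\<in>\<Omega>. w x > 0 \<longrightarrow> cmod (f x) / w x \<le> 3 * max_abs_pts f \<xi> (8*N)) \<and>
           (SUP x\<in>\<Omega>. cmod (f x)) \<le> 3 * (SUP x\<in>\<Omega>. w x) * max_abs_pts f \<xi> (8*N)" if f: "f \<in> X" for f
  proof -
    obtain c where c: "\<forall>x\<in>\<Omega>. f x = (\<Sum>i<N. c i * u i x)" using span f by blast
    define mx where "mx = max_abs_pts f \<xi> (8*N)"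
    have fin: "finite (insert 0 ((\<lambda>j. cmod (f (\<xi> j))) ` {..<8*N}))" by simp
    have mx0: "0 \<le> mx" unfolding mx_def max_abs_pts_def by (rule Max_ge[OF fin]) simp
    have fle: "cmod (f (\<xi> p)) \<le> mx" if "p < 8*N" for p
      unfolding mx_def max_abs_pts_def by (rule Max_ge[OF fin]) (use that in simp)
    define S where "S = (\<Sum>i<N. (cmod (c i))^2)"
    have S0: "0 \<le> S" unfolding S_def by (simp add: sum_nonneg)
    have "real N * S \<le> (\<Sum>p<8*N. (cmod (\<Sum>i<N. c i * u i (\<xi> p)))^2)" unfolding S_def by (rule samp)
    also have "\<dots> = (\<Sum>p<8*N. (cmod (f (\<xi> p)))^2)" using c \<xi>\<Omega> by (intro sum.cong refl) auto
    also have "\<dots> \<le> (\<Sum>p<8*N. mx^2)"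
      by (intro sum_mono power_mono fle) auto
    also have "\<dots> = real N * (8 * mx^2)" by simp
    finally have NS: "real N * S \<le> real N * (8 * mx^2)" .
    have S8: "S \<le> 8 * mx^2"
    proof (cases "N = 0")
      case True then show ?thesis by (simp add: S_def)
    next
      case False then show ?thesis using NS by simp
    qed
    have pw: "cmod (f x) \<le> 3 * mx * w x" if x: "x \<in> \<Omega>" for x
    proof -
      have "cmod (f x) \<le> (\<Sum>i<N. cmod (c i) * cmod (u i x))"
        using c x norm_sum[of "\<lambda>i. c i * u i x" "{..<N}"] by (simp add: norm_mult)
      moreover have "(\<Sum>i<N. cmod (c i) * cmod (u i x))^2 \<le> S * (w x)^2"
        unfolding S_def w2 by (rule Cauchy_Schwarz_ineq_sum)
      ultimately have "(cmod (f x))^2 \<le> S * (w x)^2"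
        by (meson norm_ge_zero order_trans power_mono)
      also have "\<dots> \<le> (8 * mx^2) * (w x)^2" by (intro mult_right_mono S8) simp
      also have "\<dots> \<le> (9 * mx^2) * (w x)^2" by (intro mult_right_mono) auto
      also have "\<dots> = (3 * mx * w x)^2" by (simp add: power_mult_distrib)
      finally have sq: "(cmod (f x))^2 \<le> (3 * mx * w x)^2" .
      have "0 \<le> 3 * mx * w x" using mx0 w0[of x] by simp
      then show ?thesis by (rule power2_le_imp_le[OF sq])
    qed
    show ?thesis unfolding mx_def[symmetric]
    proof (intro conjI ballI impI)
      fix x assume x: "x \<in> \<Omega>" and wp: "0 < w x"
      show "cmod (f x) / w x \<le> 3 * mx" using pw[OF x] unfolding pos_divide_le_eq[OF wp] .
    next
      show "(SUP x\<in>\<Omega>. cmod (f x)) \<le> 3 * (SUP x\<in>\<Omega>. w x) * mx"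
      proof (rule cSUP_least[OF \<Omega>ne])
        fix x assume x: "x \<in> \<Omega>"
        have "w x \<le> (SUP x\<in>\<Omega>. w x)" by (rule cSUP_upper[OF x bdd])
        then have "3 * mx * w x \<le> 3 * mx * (SUP x\<in>\<Omega>. w x)" using mx0 by (intro mult_left_mono) auto
        moreover have "3 * (SUP x\<in>\<Omega>. w x) * mx = 3 * mx * (SUP x\<in>\<Omega>. w x)" by (simp only: ac_simps)
        ultimately show "cmod (f x) \<le> 3 * (SUP x\<in>\<Omega>. w x) * mx" using pw[OF x] by linarith
      qed
    qed
  qed
  have fin: "\<exists>(m::nat) (\<xi>::nat \<Rightarrow> (nat \<Rightarrow> real)).
        real m \<le> 8 * real N \<and> (\<forall>j<m. \<xi> j \<in> \<Omega>) \<and>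
        (\<forall>f\<in>X.
           (\<forall>x\<in>\<Omega>. w x > 0 \<longrightarrow> cmod (f x) / w x \<le> 3 * max_abs_pts f \<xi> m) \<and>
           (SUP x\<in>\<Omega>. cmod (f x)) \<le> 3 * (SUP x\<in>\<Omega>. w x) * max_abs_pts f \<xi> m)"
  proof (intro exI[of _ "8*N"] exI[of _ \<xi>] conjI)
    show "real (8*N) \<le> 8 * real N" by simp
    show "\<forall>j<8*N. \<xi> j \<in> \<Omega>" by (rule \<xi>\<Omega>)
    show "\<forall>f\<in>X. (\<forall>x\<in>\<Omega>. w x > 0 \<longrightarrow> cmod (f x) / w x \<le> 3 * max_abs_pts f \<xi> (8*N)) \<and>
           (SUP x\<in>\<Omega>. cmod (f x)) \<le> 3 * (SUP x\<in>\<Omega>. w x) * max_abs_pts f \<xi> (8*N)"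
      using core by blast
  qed
  then show ?thesis unfolding w_def Let_def .
qed

theorem theorem2p3:
  "\<exists>C1 C2 :: real. C1 > 0 \<and> C2 > 0 \<and>
   (\<forall>(d::nat) (\<Omega>::(nat \<Rightarrow> real) set) (\<mu>::(nat \<Rightarrow> real) measure)
      (X::((nat \<Rightarrow> real) \<Rightarrow> complex) set) (N::nat) (u::nat \<Rightarrow> (nat \<Rightarrow> real) \<Rightarrow> complex).
     \<Omega> \<subseteq> euclid_pts d \<and> compact \<Omega> \<and>
     prob_space \<mu> \<and> sets \<mu> = sets (restrict_space borel \<Omega>) \<and>
     complex_fun_subspace X \<and> (\<forall>f\<in>X. continuous_on \<Omega> f) \<and>
     (\<forall>i<N. u i \<in> X) \<and>
     (\<forall>i<N. \<forall>j<N. integral\<^sup>L \<mu> (\<lambda>x. u i x * cnj (u j x)) = (if i = j then 1 else 0)) \<and>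
     (\<forall>f\<in>X. \<exists>c::nat \<Rightarrow> complex. \<forall>x\<in>\<Omega>. f x = (\<Sum>i<N. c i * u i x))
     \<longrightarrow>
     (let w = (\<lambda>x. sqrt (\<Sum>i<N. (cmod (u i x))\<^sup>2)) in
      \<exists>(m::nat) (\<xi>::nat \<Rightarrow> (nat \<Rightarrow> real)).
        real m \<le> C1 * real N \<and> (\<forall>j<m. \<xi> j \<in> \<Omega>) \<and>
        (\<forall>f\<in>X.
           (\<forall>x\<in>\<Omega>. w x > 0 \<longrightarrow> cmod (f x) / w x \<le> C2 * max_abs_pts f \<xi> m) \<and>
           (SUP x\<in>\<Omega>. cmod (f x)) \<le> C2 * (SUP x\<in>\<Omega>. w x) * max_abs_pts f \<xi> m)))"
  apply (rule exI[of _ "8::real"], rule exI[of _ "3::real"], intro conjI allI impI)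
    apply simp
   apply simp
  apply (elim conjE)
  apply (rule main_lemma)
        apply assumption+
  done

end
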